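(* For each completely regular frame $L$, $\overline{\mathrm{C}}(\mathfrak{B}(L))$ is isomorphic to the Dedekind–MacNeille completion of $\overline{\mathrm{C}}(L)$.
   Context: $\mathbb{Q}$ is the rationals; $a^\ast$ is the pseudocomplement; $\mathfrak{B}(L)=\{a\in L\mid a=a^{\ast\ast}\}$ is the Booleanization of $L$ (a complete Boolean algebra, hence a frame). The frame $\mathfrak{L}(\overline{\mathbb{IR}})$ is presented by generators $(r,\textsf{---})$, $(\textsf{---},s)$ ($r,s\in\mathbb{Q}$) subject to (r1) $(r,\textsf{---})\wedge(\textsf{---},s)=0$ whenever $r\ge s$; (r3) $(r,\textsf{---})=\bigvee_{s>r}(s,\textsf{---})$; (r4) $(\textsf{---},s)=\bigvee_{r<s}(\textsf{---},r)$. For a frame $M$, $\overline{\mathrm{C}}(M)$ is the set of frame homomorphisms $f\colon\mathfrak{L}(\overline{\mathbb{IR}})\to M$ with $f(r,\textsf{---})\vee f(\textsf{---},s)=1$ whenever $r<s$ (extended continuous real functions), ordered by $f\le g$ iff $f(r,\textsf{---})\le g(r,\textsf{---})$ and $g(\textsf{---},s)\le f(\textsf{---},s)$ for all $r,s$. A Dedekind–MacNeille completion of a poset is a join- and meet-dense embedding into a complete lattice. *)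

theory Defs
  imports Main "HOL.Rat"
begin

class frame = complete_lattice +
  assumes frame_distrib: "inf a (Sup S) = (SUP s\<in>S. inf a s)"

definition pc :: "'a::frame \<Rightarrow> 'a" where
  "pc a = Sup {x. inf x a = bot}"

definition rather_below :: "'a::frame \<Rightarrow> 'a \<Rightarrow> bool" where
  "rather_below a b \<longleftrightarrow> sup (pc a) b = top"

definition completely_below :: "'a::frame \<Rightarrow> 'a \<Rightarrow> bool" where
  "completely_below a b \<longleftrightarrow> (\<exists>c :: rat \<Rightarrow> 'a. c 0 = a \<and> c 1 = b \<and>
      (\<forall>p q. 0 \<le> p \<longrightarrow> p < q \<longrightarrow> q \<le> 1 \<longrightarrow> rather_below (c p) (c q)))"

definition completely_regular :: "'a::frame itself \<Rightarrow> bool" where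
  "completely_regular _ \<longleftrightarrow> (\<forall>a::'a. a = Sup {b. completely_below b a})"

text \<open>Booleanization B(L) = {a | a = a**}, as a subset of L carrying the induced order.\<close>
definition booleanization :: "'a::frame set" where
  "booleanization = {a. a = pc (pc a)}"

text \<open>A frame is described by a carrier A with the order inherited from the ambient
  type; its joins and meets are least upper / greatest lower bounds inside A.\<close>

definition is_lub_in :: "'a::order set \<Rightarrow> 'a set \<Rightarrow> 'a \<Rightarrow> bool" where
  "is_lub_in A S x \<longleftrightarrow> x \<in> A \<and> (\<forall>s\<in>S. s \<le> x) \<and> (\<forall>y\<in>A. (\<forall>s\<in>S. s \<le> y) \<longrightarrow> x \<le> y)"

definition is_glb_in :: "'a::order set \<Rightarrow> 'a set \<Rightarrow> 'a \<Rightarrow> bool" where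
  "is_glb_in A S x \<longleftrightarrow> x \<in> A \<and> (\<forall>s\<in>S. x \<le> s) \<and> (\<forall>y\<in>A. (\<forall>s\<in>S. y \<le> s) \<longrightarrow> y \<le> x)"

definition join_in :: "'a::order set \<Rightarrow> 'a set \<Rightarrow> 'a" where
  "join_in A S = (THE x. is_lub_in A S x)"

definition meet_in :: "'a::order set \<Rightarrow> 'a set \<Rightarrow> 'a" where
  "meet_in A S = (THE x. is_glb_in A S x)"

text \<open>A frame homomorphism f from the presented frame L(IR-bar) to the frame (carrier A)
  is, by the universal property of presentations, the same as an assignment of the
  generators respecting the relations (r1), (r3), (r4). We record it as the pair
  (u, l) with u r = f(r,--) and l s = f(--,s). The element lies in C-bar(A) iff
  additionally f(r,--) \<or> f(--,s) = 1 for r < s.\<close>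

definition ext_C :: "'a::order set \<Rightarrow> ((rat \<Rightarrow> 'a) \<times> (rat \<Rightarrow> 'a)) set" where
  "ext_C A = {(u, l).
      (\<forall>r. u r \<in> A) \<and> (\<forall>s. l s \<in> A) \<and>
      (\<forall>r s. s \<le> r \<longrightarrow> meet_in A {u r, l s} = join_in A {}) \<and>
      (\<forall>r. u r = join_in A (u ` {s. r < s})) \<and>
      (\<forall>s. l s = join_in A (l ` {r. r < s})) \<and>
      (\<forall>r s. r < s \<longrightarrow> join_in A {u r, l s} = meet_in A {})}"

definition ext_le :: "(rat \<Rightarrow> 'a::order) \<times> (rat \<Rightarrow> 'a) \<Rightarrow> (rat \<Rightarrow> 'a) \<times> (rat \<Rightarrow> 'a) \<Rightarrow> bool" where
  "ext_le f g \<longleftrightarrow> (\<forall>r. fst f r \<le> fst g r) \<and> (\<forall>s. snd g s \<le> snd f s)"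

definition lub_wrt :: "('b \<Rightarrow> 'b \<Rightarrow> bool) \<Rightarrow> 'b set \<Rightarrow> 'b set \<Rightarrow> 'b \<Rightarrow> bool" where
  "lub_wrt le Q S x \<longleftrightarrow> x \<in> Q \<and> (\<forall>s\<in>S. le s x) \<and> (\<forall>y\<in>Q. (\<forall>s\<in>S. le s y) \<longrightarrow> le x y)"

definition glb_wrt :: "('b \<Rightarrow> 'b \<Rightarrow> bool) \<Rightarrow> 'b set \<Rightarrow> 'b set \<Rightarrow> 'b \<Rightarrow> bool" where
  "glb_wrt le Q S x \<longleftrightarrow> x \<in> Q \<and> (\<forall>s\<in>S. le x s) \<and> (\<forall>y\<in>Q. (\<forall>s\<in>S. le y s) \<longrightarrow> le y x)"

definition is_DM_completion ::
  "('a \<Rightarrow> 'a \<Rightarrow> bool) \<Rightarrow> 'a set \<Rightarrow> ('b \<Rightarrow> 'b \<Rightarrow> bool) \<Rightarrow> 'b set \<Rightarrow> ('a \<Rightarrow> 'b) \<Rightarrow> bool" where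
  "is_DM_completion leP P leQ Q e \<longleftrightarrow>
     (\<forall>x\<in>Q. leQ x x) \<and>
     (\<forall>x\<in>Q. \<forall>y\<in>Q. \<forall>z\<in>Q. leQ x y \<longrightarrow> leQ y z \<longrightarrow> leQ x z) \<and>
     (\<forall>x\<in>Q. \<forall>y\<in>Q. leQ x y \<longrightarrow> leQ y x \<longrightarrow> x = y) \<and>
     (\<forall>S\<subseteq>Q. \<exists>x. lub_wrt leQ Q S x) \<and>
     e ` P \<subseteq> Q \<and>
     (\<forall>x\<in>P. \<forall>y\<in>P. leQ (e x) (e y) \<longleftrightarrow> leP x y) \<and>
     (\<forall>q\<in>Q. lub_wrt leQ Q {e x | x. x \<in> P \<and> leQ (e x) q} q) \<and>
     (\<forall>q\<in>Q. glb_wrt leQ Q {e x | x. x \<in> P \<and> leQ q (e x)} q)"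

end

theory Submission
  imports Defs
begin

lemma frame_inf_sup: "inf (a::'a::frame) (sup b c) = sup (inf a b) (inf a c)"
proof -
  have "inf a (sup b c) = inf a (Sup {b,c})" by simp
  also have "... = (SUP s\<in>{b,c}. inf a s)" by (rule frame_distrib)
  finally show ?thesis by simp
qed

lemma frame_inf_SUP: "inf (a::'a::frame) (SUP i\<in>I. f i) = (SUP i\<in>I. inf a (f i))"
  using frame_distrib[of a "f ` I"] by (simp add: image_image)

lemma inf_pc: "inf (a::'a::frame) (pc a) = bot"
proof -
  have "inf a (pc a) = (SUP s\<in>{x. inf x a = bot}. inf a s)" unfolding pc_def by (rule frame_distrib)
  also have "... = bot" by (simp add: SUP_bot_conv inf_commute)
  finally show ?thesis .
qed

lemma le_pc_iff: "(x::'a::frame) \<le> pc a \<longleftrightarrow> inf x a = bot"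
proof
  assume "x \<le> pc a"
  then have "inf x a \<le> inf (pc a) a" by (rule inf_mono) simp
  then show "inf x a = bot" using inf_pc[of a] by (simp add: inf_commute bot_unique)
next
  assume "inf x a = bot" then show "x \<le> pc a" unfolding pc_def by (auto intro: Sup_upper)
qed

lemma pc_anti: "(a::'a::frame) \<le> b \<Longrightarrow> pc b \<le> pc a"
proof -
  assume "a \<le> b"
  then have "inf (pc b) a \<le> inf (pc b) b" by (rule inf_mono[OF order_refl])
  then show ?thesis using inf_pc[of b] by (simp add: le_pc_iff inf_commute bot_unique)
qed

lemma le_pcpc: "(a::'a::frame) \<le> pc (pc a)"
  by (simp add: le_pc_iff inf_pc)

lemma pc3: "pc (pc (pc (a::'a::frame))) = pc a"
  by (simp add: antisym le_pcpc pc_anti)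

lemma pc_bot: "pc (bot::'a::frame) = top"
  by (metis le_pc_iff inf_bot_right top_unique order_refl)

lemma pc_top: "pc (top::'a::frame) = bot"
  using inf_pc[of "top::'a"] by simp

lemma pcpc_mono: "(a::'a::frame) \<le> b \<Longrightarrow> pc (pc a) \<le> pc (pc b)"
  by (simp add: pc_anti)

lemma le_pc_Sup_iff: "(x::'a::frame) \<le> pc (Sup S) \<longleftrightarrow> x \<le> (INF s\<in>S. pc s)"
proof -
  have "x \<le> pc (Sup S) \<longleftrightarrow> (SUP s\<in>S. inf x s) = bot"
    by (simp add: le_pc_iff frame_distrib)
  also have "... \<longleftrightarrow> (\<forall>s\<in>S. x \<le> pc s)" by (simp add: SUP_bot_conv le_pc_iff)
  also have "... \<longleftrightarrow> x \<le> (INF s\<in>S. pc s)" by (simp add: le_INF_iff)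
  finally show ?thesis .
qed

lemma pc_Sup: "pc (Sup S) = (INF s\<in>S. pc (s::'a::frame))"
  by (meson antisym le_pc_Sup_iff order_refl)

lemma pc_SUP: "pc (SUP i\<in>I. f i) = (INF i\<in>I. pc (f i::'a::frame))"
  by (simp add: pc_Sup image_image)

lemma pc_sup: "pc (sup a b) = inf (pc a) (pc (b::'a::frame))"
  using pc_Sup[of "{a,b}"] by simp

lemma pcpc_SUP: "pc (pc (SUP i\<in>I. f i)) = pc (pc (SUP i\<in>I. pc (pc (f i::'a::frame))))"
  by (simp add: pc_SUP pc3)

lemma pcpc_Sup: "pc (pc (Sup S)) = pc (pc (SUP s\<in>S. pc (pc (s::'a::frame))))"
  using pcpc_SUP[of "\<lambda>x. x" S] by simp

lemma pcpc_inf: "pc (pc (inf a b)) = inf (pc (pc a)) (pc (pc (b::'a::frame)))"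
proof (rule antisym)
  show "pc (pc (inf a b)) \<le> inf (pc (pc a)) (pc (pc b))" by (simp add: pcpc_mono)
  have 1: "inf (pc (inf a b)) a \<le> pc b"
    using inf_pc[of "inf a b"] by (simp add: le_pc_iff inf_aci)
  then have "inf (inf (pc (inf a b)) a) (pc (pc b)) = bot"
    by (metis inf_pc inf_mono order_refl bot_unique inf_commute pc_anti)
  then have 2: "inf (inf (pc (inf a b)) (pc (pc b))) a = bot"
    by (simp add: inf_aci)
  then have "inf (pc (inf a b)) (pc (pc b)) \<le> pc a" by (simp add: le_pc_iff)
  then have "inf (inf (pc (inf a b)) (pc (pc b))) (pc (pc a)) = bot"
    by (metis inf_pc inf_mono order_refl bot_unique inf_commute)
  then show "inf (pc (pc a)) (pc (pc b)) \<le> pc (pc (inf a b))"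
    by (simp add: le_pc_iff inf_aci)
qed

lemma pcpc_sup_pc: "pc (pc (sup a (pc (a::'a::frame)))) = top"
  by (simp add: pc_sup pc_bot inf_pc[of "pc a", simplified inf_commute] inf_commute)

lemma rather_below_le: "rather_below (x::'a::frame) y \<Longrightarrow> x \<le> y"
proof -
  assume "rather_below x y"
  then have "x = inf x (sup (pc x) y)" by (simp add: rather_below_def)
  also have "... = inf x y" by (simp add: frame_inf_sup inf_pc)
  finally show ?thesis by (metis inf.cobounded2)
qed

lemma rather_below_mono: "(x::'a::frame) \<le> y \<Longrightarrow> rather_below y z \<Longrightarrow> z \<le> w \<Longrightarrow> rather_below x w"
  unfolding rather_below_def by (metis pc_anti sup_mono top_unique)


lemma join_in_eq: "is_lub_in (A::'a::order set) S x \<Longrightarrow> join_in A S = x"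
  unfolding join_in_def by (rule the_equality) (auto simp: is_lub_in_def intro: antisym)

lemma meet_in_eq: "is_glb_in (A::'a::order set) S x \<Longrightarrow> meet_in A S = x"
  unfolding meet_in_def by (rule the_equality) (auto simp: is_glb_in_def intro: antisym)

lemma join_in_UNIV: "join_in (UNIV::'a::complete_lattice set) S = Sup S"
  by (rule join_in_eq) (simp add: is_lub_in_def Sup_upper Sup_least)

lemma meet_in_UNIV: "meet_in (UNIV::'a::complete_lattice set) S = Inf S"
  by (rule meet_in_eq) (simp add: is_glb_in_def Inf_lower Inf_greatest)

lemma B_pcpc: "pc (pc (a::'a::frame)) \<in> booleanization"
  by (simp add: booleanization_def pc3)

lemma B_eq: "(a::'a::frame) \<in> booleanization \<Longrightarrow> pc (pc a) = a"
  by (simp add: booleanization_def)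

lemma join_in_B: "join_in (booleanization::'a::frame set) S = pc (pc (Sup S))"
proof (rule join_in_eq)
  show "is_lub_in booleanization S (pc (pc (Sup S)))"
    unfolding is_lub_in_def
  proof (intro conjI ballI impI)
    show "pc (pc (Sup S)) \<in> booleanization" by (rule B_pcpc)
  next
    fix s assume "s \<in> S" then show "s \<le> pc (pc (Sup S))"
      by (meson Sup_upper le_pcpc order_trans)
  next
    fix y :: 'a assume y: "y \<in> booleanization" "\<forall>s\<in>S. s \<le> y"
    then have "Sup S \<le> y" by (simp add: Sup_least)
    then show "pc (pc (Sup S)) \<le> y" using y(1) by (metis B_eq pcpc_mono)
  qed
qed

lemma meet_in_B: "S \<subseteq> (booleanization::'a::frame set) \<Longrightarrow> meet_in booleanization S = Inf S"
proof (rule meet_in_eq)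
  assume S: "S \<subseteq> booleanization"
  have "pc (pc (Inf S)) \<le> Inf S"
  proof (rule Inf_greatest)
    fix x assume "x \<in> S"
    then have "pc (pc (Inf S)) \<le> pc (pc x)" by (simp add: Inf_lower pcpc_mono)
    then show "pc (pc (Inf S)) \<le> x" using S \<open>x \<in> S\<close> by (metis B_eq subsetD)
  qed
  then have "Inf S \<in> booleanization" by (simp add: antisym booleanization_def le_pcpc)
  then show "is_glb_in booleanization S (Inf S)"
    by (simp add: is_glb_in_def Inf_lower Inf_greatest)
qed

lemma B_bot: "(bot::'a::frame) \<in> booleanization"
  using B_pcpc[of "bot::'a"] by (simp add: pc_bot pc_top)

lemma SUP_dense_lower:
  "(SUP t\<in>{t. t<s}. SUP r\<in>{r. r<t}. F r) = (SUP r\<in>{r::rat. r<s}. (F r::'a::complete_lattice))"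
proof (rule antisym)
  show "(SUP t\<in>{t. t<s}. SUP r\<in>{r. r<t}. F r) \<le> (SUP r\<in>{r::rat. r<s}. F r)"
    by (rule SUP_least, rule SUP_least) (auto intro: SUP_upper)
  show "(SUP r\<in>{r::rat. r<s}. F r) \<le> (SUP t\<in>{t. t<s}. SUP r\<in>{r. r<t}. F r)"
  proof (rule SUP_least)
    fix r assume "r \<in> {r. r < s}"
    then have "r < (r+s)/2" "(r+s)/2 < s" by auto
    then have "F r \<le> (SUP r'\<in>{r'. r'<(r+s)/2}. F r')" by (intro SUP_upper) simp
    also have "... \<le> (SUP t\<in>{t. t<s}. SUP r\<in>{r. r<t}. F r)"
      using \<open>(r+s)/2 < s\<close> by (intro SUP_upper) simp
    finally show "F r \<le> (SUP t\<in>{t. t<s}. SUP r\<in>{r. r<t}. F r)" .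
  qed
qed

lemma SUP_dense_upper:
  "(SUP t\<in>{t. r<t}. SUP s\<in>{s. t<s}. F s) = (SUP s\<in>{s::rat. r<s}. (F s::'a::complete_lattice))"
proof (rule antisym)
  show "(SUP t\<in>{t. r<t}. SUP s\<in>{s. t<s}. F s) \<le> (SUP s\<in>{s::rat. r<s}. F s)"
    by (rule SUP_least, rule SUP_least) (auto intro: SUP_upper)
  show "(SUP s\<in>{s::rat. r<s}. F s) \<le> (SUP t\<in>{t. r<t}. SUP s\<in>{s. t<s}. F s)"
  proof (rule SUP_least)
    fix s assume "s \<in> {s. r < s}"
    then have "r < (r+s)/2" "(r+s)/2 < s" by auto
    then have "F s \<le> (SUP s'\<in>{s'. (r+s)/2<s'}. F s')" by (intro SUP_upper) simp
    also have "... \<le> (SUP t\<in>{t. r<t}. SUP s\<in>{s. t<s}. F s)"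
      using \<open>r < (r+s)/2\<close> by (intro SUP_upper) simp
    finally show "F s \<le> (SUP t\<in>{t. r<t}. SUP s\<in>{s. t<s}. F s)" .
  qed
qed


definition lofB :: "(rat \<Rightarrow> 'a::frame) \<Rightarrow> rat \<Rightarrow> 'a" where
  "lofB u s = pc (pc (SUP r\<in>{r. r<s}. pc (u r)))"

definition lofU :: "(rat \<Rightarrow> 'a::frame) \<Rightarrow> rat \<Rightarrow> 'a" where
  "lofU u s = (SUP r\<in>{r. r<s}. pc (u r))"

lemma meet2_B: "a \<in> booleanization \<Longrightarrow> b \<in> booleanization \<Longrightarrow>
   meet_in (booleanization::'a::frame set) {a, b} = inf a b"
  by (subst meet_in_B) auto

lemma meet0_B: "meet_in (booleanization::'a::frame set) {} = top"
  by (subst meet_in_B) auto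

lemma ext_C_B_iff: "(u, l) \<in> ext_C (booleanization::'a::frame set) \<longleftrightarrow>
      (\<forall>r. u r \<in> booleanization) \<and> (\<forall>s. l s \<in> booleanization) \<and>
      (\<forall>r s. s \<le> r \<longrightarrow> inf (u r) (l s) = bot) \<and>
      (\<forall>r. u r = pc (pc (SUP s\<in>{s. r<s}. u s))) \<and>
      (\<forall>s. l s = pc (pc (SUP r\<in>{r. r<s}. l r))) \<and>
      (\<forall>r s. r < s \<longrightarrow> pc (pc (sup (u r) (l s))) = top)"
proof (cases "(\<forall>r. u r \<in> booleanization) \<and> (\<forall>s. l s \<in> booleanization)")
  case True
  then have m: "meet_in booleanization {u r, l s} = inf (u r) (l s)" for r s by (simp add: meet2_B)
  show ?thesis unfolding ext_C_def join_in_B meet0_B m mem_Collect_eq prod.case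
      Sup_insert Sup_empty sup_bot_right pc_bot pc_top by (rule refl)
next
  case False then show ?thesis unfolding ext_C_def by auto
qed

lemma ext_C_U_iff: "(u, l) \<in> ext_C (UNIV::'a::frame set) \<longleftrightarrow>
      (\<forall>r s. s \<le> r \<longrightarrow> inf (u r) (l s) = bot) \<and>
      (\<forall>r. u r = (SUP s\<in>{s. r<s}. u s)) \<and>
      (\<forall>s. l s = (SUP r\<in>{r. r<s}. l r)) \<and>
      (\<forall>r s. r < s \<longrightarrow> sup (u r) (l s) = top)"
  unfolding ext_C_def by (simp add: join_in_UNIV meet_in_UNIV)

lemma anti_B:
  assumes "\<forall>r. u r = pc (pc (SUP s\<in>{s. r<s}. u s))" "r < t"
  shows "u t \<le> (u r::'a::frame)"
proof -
  have "u t \<le> (SUP s\<in>{s. r<s}. u s)" using assms(2) by (intro SUP_upper) simp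
  also have "... \<le> pc (pc (SUP s\<in>{s. r<s}. u s))" by (rule le_pcpc)
  finally show ?thesis using assms(1) by metis
qed

lemma ext_C_B_intro:
  assumes B: "\<forall>r. u r \<in> booleanization" and rc: "\<forall>r. u r = pc (pc (SUP s\<in>{s. r<s}. u s))"
  shows "(u, lofB u) \<in> ext_C (booleanization::'a::frame set)"
  unfolding ext_C_B_iff
proof (intro conjI allI impI)
  show "u r \<in> booleanization" for r using B by simp
  show "lofB u s \<in> booleanization" for s by (simp add: lofB_def B_pcpc)
next
  fix r s :: rat assume "s \<le> r"
  have "inf (u r) (lofB u s) = inf (pc (pc (u r))) (lofB u s)" using B by (simp add: B_eq)
  also have "... = pc (pc (inf (u r) (SUP t\<in>{t. t<s}. pc (u t))))"
    by (simp add: lofB_def pcpc_inf)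
  also have "... = pc (pc (SUP t\<in>{t. t<s}. inf (u r) (pc (u t))))" by (simp add: frame_inf_SUP)
  also have "(SUP t\<in>{t. t<s}. inf (u r) (pc (u t))) = (bot::'a)"
  proof (rule SUP_eq_const[of "{t. t<s}"], simp, rule exI[of _ "s - 1"], simp)
    fix t assume "t \<in> {t. t<s}"
    then have "u r \<le> u t" using anti_B[OF rc, of t r] \<open>s \<le> r\<close> by simp
    then have "inf (u r) (pc (u t)) \<le> inf (u t) (pc (u t))" by (rule inf_mono) simp
    then show "inf (u r) (pc (u t)) = bot" by (simp add: inf_pc bot_unique)
  qed
  also have "pc (pc (bot::'a)) = bot" by (simp add: pc_bot pc_top)
  finally show "inf (u r) (lofB u s) = bot" .
next
  fix r show "u r = pc (pc (SUP s\<in>{s. r<s}. u s))" using rc by blast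
next
  fix s
  have "pc (pc (SUP r\<in>{r. r<s}. lofB u r)) = pc (pc (SUP t\<in>{t. t<s}. SUP r\<in>{r. r<t}. pc (u r)))"
    unfolding lofB_def by (rule pcpc_SUP[symmetric])
  also have "... = lofB u s" by (simp add: SUP_dense_lower lofB_def)
  finally show "lofB u s = pc (pc (SUP r\<in>{r. r<s}. lofB u r))" by simp
next
  fix r s :: rat assume "r < s"
  have "pc (u r) \<le> (SUP r\<in>{r. r<s}. pc (u r))" using \<open>r < s\<close> by (intro SUP_upper) simp
  then have "pc (u r) \<le> lofB u s" unfolding lofB_def using le_pcpc order_trans by blast
  then have "sup (u r) (pc (u r)) \<le> sup (u r) (lofB u s)" by (rule sup_mono[OF order_refl])
  then have "pc (pc (sup (u r) (pc (u r)))) \<le> pc (pc (sup (u r) (lofB u s)))" by (rule pcpc_mono)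
  then show "pc (pc (sup (u r) (lofB u s))) = top" by (metis pcpc_sup_pc top_unique)
qed


lemma anti_U:
  assumes "\<forall>r. u r = (SUP s\<in>{s. r<s}. u s)" "r < t"
  shows "u t \<le> (u r::'a::complete_lattice)"
proof -
  have "u t \<le> (SUP s\<in>{s. r<s}. u s)" using assms(2) by (intro SUP_upper) simp
  then show ?thesis using assms(1) by metis
qed

lemma mono_U:
  assumes "\<forall>s. l s = (SUP r\<in>{r. r<s}. l r)" "t < s"
  shows "l t \<le> (l s::'a::complete_lattice)"
proof -
  have "l t \<le> (SUP r\<in>{r. r<s}. l r)" using assms(2) by (intro SUP_upper) simp
  then show ?thesis using assms(1) by metis
qed

lemma mono_B:
  assumes "\<forall>s. l s = pc (pc (SUP r\<in>{r. r<s}. l r))" "t < s"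
  shows "l t \<le> (l s::'a::frame)"
proof -
  have "l t \<le> (SUP r\<in>{r. r<s}. l r)" using assms(2) by (intro SUP_upper) simp
  also have "... \<le> pc (pc (SUP r\<in>{r. r<s}. l r))" by (rule le_pcpc)
  finally show ?thesis using assms(1) by metis
qed

lemma ext_C_B_D:
  assumes "(u, l) \<in> ext_C (booleanization::'a::frame set)"
  shows "l = lofB u"
proof
  fix s
  note H = assms[unfolded ext_C_B_iff]
  have lB: "l x \<in> booleanization" for x using H by blast
  have ml: "\<forall>r s. s \<le> r \<longrightarrow> inf (u r) (l s) = bot" using H by blast
  have rl: "\<forall>s. l s = pc (pc (SUP r\<in>{r. r<s}. l r))" using H by blast
  have "(SUP r\<in>{r. r<s}. l r) \<le> (SUP r\<in>{r. r<s}. pc (u r))"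
  proof (rule SUP_mono)
    fix r assume "r \<in> {r. r<s}"
    have "inf (l r) (u r) = bot" using ml by (simp add: inf_commute)
    then show "\<exists>m\<in>{r. r<s}. l r \<le> pc (u m)" using \<open>r \<in> {r. r<s}\<close> by (auto simp: le_pc_iff)
  qed
  then have 1: "l s \<le> lofB u s" unfolding lofB_def using rl pcpc_mono by metis
  have "(SUP r\<in>{r. r<s}. pc (u r)) \<le> l s"
  proof (rule SUP_least)
    fix r assume "r \<in> {r. r<s}"
    define t where "t = (r+s)/2"
    have rt: "r < t" "t < s" using \<open>r \<in> {r. r<s}\<close> by (auto simp: t_def)
    have top: "pc (pc (sup (u r) (l t))) = top" using H rt by blast
    have "inf (pc (u r)) (sup (u r) (l t)) = inf (pc (u r)) (l t)"
      by (simp add: frame_inf_sup inf_pc inf_commute)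
    then have "pc (pc (inf (pc (u r)) (sup (u r) (l t)))) = pc (pc (inf (pc (u r)) (l t)))" by simp
    then have "pc (u r) = pc (pc (inf (pc (u r)) (l t)))" by (simp add: pcpc_inf top pc3)
    also have "... \<le> pc (pc (l t))" by (simp add: pcpc_mono)
    also have "... = l t" using lB by (simp add: B_eq)
    also have "... \<le> l s" using mono_B[OF rl rt(2)] .
    finally show "pc (u r) \<le> l s" .
  qed
  then have "lofB u s \<le> l s" unfolding lofB_def using lB pcpc_mono B_eq by metis
  then show "l s = lofB u s" using 1 by simp
qed

lemma ext_C_U_D:
  assumes "(u, l) \<in> ext_C (UNIV::'a::frame set)"
  shows "l = lofU u" and "u r = (SUP s\<in>{s. r<s}. pc (l s))"
proof -
  note H = assms[unfolded ext_C_U_iff]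
  have ml: "\<forall>r s. s \<le> r \<longrightarrow> inf (u r) (l s) = bot" using H by blast
  have rl: "\<forall>s. l s = (SUP r\<in>{r. r<s}. l r)" using H by blast
  have ru: "\<forall>r. u r = (SUP s\<in>{s. r<s}. u s)" using H by blast
  show "l = lofU u"
  proof
    fix s
    have "(SUP r\<in>{r. r<s}. l r) \<le> (SUP r\<in>{r. r<s}. pc (u r))"
    proof (rule SUP_mono)
      fix r assume "r \<in> {r. r<s}"
      have "inf (l r) (u r) = bot" using ml by (simp add: inf_commute)
      then show "\<exists>m\<in>{r. r<s}. l r \<le> pc (u m)" using \<open>r \<in> {r. r<s}\<close> by (auto simp: le_pc_iff)
    qed
    then have 1: "l s \<le> lofU u s" unfolding lofU_def using rl by metis
    have "(SUP r\<in>{r. r<s}. pc (u r)) \<le> l s"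
    proof (rule SUP_least)
      fix r assume "r \<in> {r. r<s}"
      define t where "t = (r+s)/2"
      have rt: "r < t" "t < s" using \<open>r \<in> {r. r<s}\<close> by (auto simp: t_def)
      have top: "sup (u r) (l t) = top" using H rt by blast
      have "pc (u r) = inf (pc (u r)) (sup (u r) (l t))" by (simp add: top)
      also have "... = inf (pc (u r)) (l t)"
        by (simp add: frame_inf_sup inf_pc inf_commute)
      also have "... \<le> l t" by simp
      also have "... \<le> l s" using mono_U[OF rl rt(2)] .
      finally show "pc (u r) \<le> l s" .
    qed
    then show "l s = lofU u s" using 1 unfolding lofU_def by simp
  qed
  have "(SUP s\<in>{s. r<s}. u s) \<le> (SUP s\<in>{s. r<s}. pc (l s))"
  proof (rule SUP_mono)
    fix s assume "s \<in> {s. r<s}"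
    have "inf (u s) (l s) = bot" using ml by simp
    then show "\<exists>m\<in>{s. r<s}. u s \<le> pc (l m)" using \<open>s \<in> {s. r<s}\<close> by (auto simp: le_pc_iff)
  qed
  then have 1: "u r \<le> (SUP s\<in>{s. r<s}. pc (l s))" using ru by metis
  have "(SUP s\<in>{s. r<s}. pc (l s)) \<le> u r"
  proof (rule SUP_least)
    fix s assume "s \<in> {s. r<s}"
    define t where "t = (r+s)/2"
    have rt: "r < t" "t < s" using \<open>s \<in> {s. r<s}\<close> by (auto simp: t_def)
    have top: "sup (u t) (l s) = top" using H rt by blast
    have "pc (l s) = inf (pc (l s)) (sup (u t) (l s))" by (simp add: top)
    also have "... = inf (pc (l s)) (u t)"
      by (simp add: frame_inf_sup inf_pc inf_commute)
    also have "... \<le> u t" by simp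
    also have "... \<le> u r" using anti_U[OF ru rt(1)] .
    finally show "pc (l s) \<le> u r" .
  qed
  then show "u r = (SUP s\<in>{s. r<s}. pc (l s))" using 1 by simp
qed

lemma ext_C_U_intro:
  assumes ru: "\<forall>r. v r = (SUP s\<in>{s. r<s}. v s)"
    and j: "\<forall>r t. r < t \<longrightarrow> sup (v r) (lofU v t) = top"
  shows "(v, lofU v) \<in> ext_C (UNIV::'a::frame set)"
  unfolding ext_C_U_iff
proof (intro conjI allI impI)
  fix r s :: rat assume "s \<le> r"
  have "inf (v r) (lofU v s) = (SUP t\<in>{t. t<s}. inf (v r) (pc (v t)))"
    by (simp add: lofU_def frame_inf_SUP)
  also have "... = bot"
  proof (rule SUP_eq_const[of "{t. t<s}"], simp, rule exI[of _ "s - 1"], simp)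
    fix t assume "t \<in> {t. t<s}"
    then have "v r \<le> v t" using anti_U[OF ru, of t r] \<open>s \<le> r\<close> by simp
    then have "inf (v r) (pc (v t)) \<le> inf (v t) (pc (v t))" by (rule inf_mono) simp
    then show "inf (v r) (pc (v t)) = bot" by (simp add: inf_pc bot_unique)
  qed
  finally show "inf (v r) (lofU v s) = bot" .
next
  fix r show "v r = (SUP s\<in>{s. r<s}. v s)" using ru by blast
next
  fix s show "lofU v s = (SUP r\<in>{r. r<s}. lofU v r)"
    unfolding lofU_def by (simp add: SUP_dense_lower)
next
  fix r s :: rat assume "r < s" then show "sup (v r) (lofU v s) = top" using j by blast
qed

lemma ext_le_B:
  assumes "f \<in> ext_C (booleanization::'a::frame set)" "g \<in> ext_C (booleanization::'a::frame set)"
  shows "ext_le f g \<longleftrightarrow> (\<forall>r. fst f r \<le> fst g r)"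
proof -
  obtain u l where f: "f = (u, l)" by (cases f)
  obtain u' l' where g: "g = (u', l')" by (cases g)
  have l: "l = lofB u" using assms(1) f ext_C_B_D by blast
  have l': "l' = lofB u'" using assms(2) g ext_C_B_D by blast
  have "lofB u' s \<le> lofB u s" if "\<forall>r. u r \<le> u' r" for s
    unfolding lofB_def using that by (intro pcpc_mono SUP_mono) (auto intro: pc_anti)
  then show ?thesis unfolding ext_le_def f g l l' by auto
qed


lemma h_pos: "0 < (x::rat) \<Longrightarrow> 0 < x / (1 + x) \<and> x / (1 + x) < 1"
  by (simp add: divide_simps)

lemma h_mono: "0 < (y::rat) \<Longrightarrow> y < x \<Longrightarrow> y / (1 + y) < x / (1 + x)"
  by (simp add: divide_simps algebra_simps)

lemma construct:
  assumes cb: "completely_below a b" and rs: "r < s"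
  shows "\<exists>x \<in> ext_C (UNIV::'a::frame set). a \<le> fst x r \<and> (\<forall>t. fst x t \<le> b)
            \<and> (\<forall>t. s \<le> t \<longrightarrow> fst x t = bot)"
proof -
  obtain c :: "rat \<Rightarrow> 'a" where c0: "c 0 = a" and c1: "c 1 = b"
    and rb: "\<And>p q. 0 \<le> p \<Longrightarrow> p < q \<Longrightarrow> q \<le> 1 \<Longrightarrow> rather_below (c p) (c q)"
    using cb unfolding completely_below_def by blast
  define h where "h t = (s - t) / (1 + (s - t))" for t
  have h01: "0 < h t \<and> h t < 1" if "t < s" for t
    unfolding h_def using that by (intro h_pos) simp
  have hdec: "h t2 < h t1" if "t1 < t2" "t2 < s" for t1 t2
    unfolding h_def using that by (intro h_mono) auto
  define w where "w t = (if t < s then c (h t) else bot)" for t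
  have w_anti: "w t2 \<le> w t1" if "t1 \<le> t2" for t1 t2
  proof (cases "t2 < s")
    case True
    show ?thesis
    proof (cases "t1 = t2")
      case False
      then have "t1 < t2" using that by simp
      then have "rather_below (c (h t2)) (c (h t1))"
        using h01[OF True] h01[of t1] hdec[OF _ True] True by (intro rb) auto
      then show ?thesis using True \<open>t1 < t2\<close> by (simp add: w_def rather_below_le)
    qed simp
  qed (simp add: w_def)
  define v where "v t = (SUP t'\<in>{t'. t<t'}. w t')" for t
  have v_rc: "\<forall>r. v r = (SUP s\<in>{s. r<s}. v s)"
    unfolding v_def by (simp add: SUP_dense_upper)
  have v_le_w: "v t \<le> w t" for t
    unfolding v_def by (rule SUP_least) (simp add: w_anti)
  have w_le_v: "w t' \<le> v t" if "t < t'" for t t'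
    unfolding v_def using that by (intro SUP_upper) simp
  have vb: "v t \<le> b" for t
    unfolding v_def
  proof (rule SUP_least)
    fix t' show "w t' \<le> b"
    proof (cases "t' < s")
      case True
      then have "rather_below (c (h t')) (c 1)" using h01[OF True] by (intro rb) auto
      then show ?thesis using True c1 by (simp add: w_def rather_below_le)
    qed (simp add: w_def)
  qed
  have vbot: "v t = bot" if "s \<le> t" for t
    unfolding v_def using that by (intro SUP_eq_const[of "{t'. t<t'}"]) (auto simp: w_def intro: exI[of _ "t+1"])
  have ar: "a \<le> v r"
  proof -
    define m where "m = (r+s)/2"
    have m: "r < m" "m < s" using rs by (auto simp: m_def)
    have "rather_below (c 0) (c (h m))" using h01[OF m(2)] by (intro rb) auto
    then have "a \<le> w m" using m c0 by (simp add: w_def rather_below_le)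
    also have "... \<le> v r" using w_le_v[OF m(1)] .
    finally show ?thesis .
  qed
  have j: "\<forall>r t. r < t \<longrightarrow> sup (v r) (lofU v t) = top"
  proof (intro allI impI)
    fix r t :: rat assume "r < t"
    define r' where "r' = r + 2 * (t - r) / 3"
    define m where "m = r + (t - r) / 3"
    have o: "r < m" "m < r'" "r' < t" using \<open>r < t\<close> by (auto simp: r'_def m_def field_simps)
    have "rather_below (v r') (v r)"
    proof (cases "r' < s")
      case False
      then have "v r' = bot" using vbot by simp
      then show ?thesis by (simp add: rather_below_def pc_bot)
    next
      case True
      have ms: "m < s" using o True by simp
      have "rather_below (c (h r')) (c (h m))"
        using h01[OF True] h01[OF ms] hdec[OF o(2) True] by (intro rb) auto
      moreover have "v r' \<le> c (h r')" using v_le_w[of r'] True by (simp add: w_def)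
      moreover have "c (h m) \<le> v r" using w_le_v[OF o(1)] ms by (simp add: w_def)
      ultimately show ?thesis using rather_below_mono by blast
    qed
    then have "sup (pc (v r')) (v r) = top" by (simp add: rather_below_def)
    moreover have "pc (v r') \<le> lofU v t" unfolding lofU_def using o(3) by (intro SUP_upper) simp
    ultimately show "sup (v r) (lofU v t) = top"
      by (metis sup_commute sup_mono order_refl top_unique)
  qed
  have "(v, lofU v) \<in> ext_C (UNIV::'a set)" by (rule ext_C_U_intro[OF v_rc j])
  then show ?thesis using ar vb vbot by (intro bexI[of _ "(v, lofU v)"]) auto
qed


definition eB :: "(rat \<Rightarrow> 'a::frame) \<times> (rat \<Rightarrow> 'a) \<Rightarrow> (rat \<Rightarrow> 'a) \<times> (rat \<Rightarrow> 'a)" where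
  "eB x = (\<lambda>r. pc (pc (fst x r)), \<lambda>s. pc (pc (snd x s)))"

definition sg :: "(rat \<Rightarrow> 'a) \<times> (rat \<Rightarrow> 'a) \<Rightarrow> (rat \<Rightarrow> 'a) \<times> (rat \<Rightarrow> 'a)" where
  "sg f = (\<lambda>r. snd f (- r), \<lambda>s. fst f (- s))"

lemma eB_mem:
  assumes "x \<in> ext_C (UNIV::'a::frame set)"
  shows "eB x \<in> ext_C (booleanization::'a set)"
proof -
  obtain u l where x: "x = (u, l)" by (cases x)
  note H = assms[unfolded x ext_C_U_iff]
  have ml: "\<forall>r s. s \<le> r \<longrightarrow> inf (u r) (l s) = bot" using H by blast
  have rl: "\<And>s. l s = (SUP r\<in>{r. r<s}. l r)" using H by blast
  have ru: "\<And>r. u r = (SUP s\<in>{s. r<s}. u s)" using H by blast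
  have jt: "\<forall>r s. r < s \<longrightarrow> sup (u r) (l s) = top" using H by blast
  show ?thesis unfolding x eB_def fst_conv snd_conv ext_C_B_iff
  proof (intro conjI allI impI)
    fix r s :: rat assume "s \<le> r"
    then show "inf (pc (pc (u r))) (pc (pc (l s))) = bot"
      using ml by (simp add: pcpc_inf[symmetric] pc_bot pc_top)
  next
    fix r
    have "pc (pc (SUP s\<in>{s. r<s}. pc (pc (u s)))) = pc (pc (SUP s\<in>{s. r<s}. u s))"
      by (rule pcpc_SUP[symmetric])
    also have "... = pc (pc (u r))" by (subst ru[of r]) (rule refl)
    finally show "pc (pc (u r)) = pc (pc (SUP s\<in>{s. r<s}. pc (pc (u s))))" by simp
  next
    fix s
    have "pc (pc (SUP r\<in>{r. r<s}. pc (pc (l r)))) = pc (pc (SUP r\<in>{r. r<s}. l r))"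
      by (rule pcpc_SUP[symmetric])
    also have "... = pc (pc (l s))" by (subst rl[of s]) (rule refl)
    finally show "pc (pc (l s)) = pc (pc (SUP r\<in>{r. r<s}. pc (pc (l r))))" by simp
  next
    fix r s :: rat assume "r < s"
    then have "sup (u r) (l s) = top" using jt by blast
    then have "pc (pc (sup (u r) (l s))) = top" by (simp add: pc_bot pc_top)
    moreover have "pc (pc (sup (u r) (l s))) \<le> pc (pc (sup (pc (pc (u r))) (pc (pc (l s)))))"
      by (intro pcpc_mono sup_mono le_pcpc)
    ultimately show "pc (pc (sup (pc (pc (u r))) (pc (pc (l s))))) = top" by (simp add: top_unique)
  qed (simp_all add: B_pcpc)
qed

lemma img_neg1: "(\<lambda>s. l (- s)) ` {s. r < s} = l ` {t::rat. t < - r}"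
proof -
  have "uminus ` {s::rat. r < s} = {t. t < - r}"
    using image_uminus_greaterThan[of r] by (simp add: greaterThan_def lessThan_def)
  then show ?thesis by (metis image_image)
qed
lemma img_neg2: "(\<lambda>s. l (- s)) ` {s. s < r} = l ` {t::rat. - r < t}"
proof -
  have "uminus ` {s::rat. s < r} = {t. - r < t}"
    using image_uminus_lessThan[of r] by (simp add: greaterThan_def lessThan_def)
  then show ?thesis by (metis image_image)
qed
lemma allneg: "(\<forall>r. P (- r::rat)) \<longleftrightarrow> (\<forall>r. P r)"
  by (metis minus_minus)

lemma sg_mem:
  assumes "f \<in> ext_C A"
  shows "sg f \<in> ext_C A"
proof -
  obtain u l where f: "f = (u, l)" by (cases f)
  from assms have H: "(\<forall>r. u r \<in> A) \<and> (\<forall>s. l s \<in> A) \<and>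
      (\<forall>r s. s \<le> r \<longrightarrow> meet_in A {u r, l s} = join_in A {}) \<and>
      (\<forall>r. u r = join_in A (u ` {s. r < s})) \<and>
      (\<forall>s. l s = join_in A (l ` {r. r < s})) \<and>
      (\<forall>r s. r < s \<longrightarrow> join_in A {u r, l s} = meet_in A {})"
    unfolding f ext_C_def mem_Collect_eq prod.case by blast
  have uA: "\<forall>r. u r \<in> A" and lA: "\<forall>s. l s \<in> A" using H by blast+
  have m0: "\<forall>r s. s \<le> r \<longrightarrow> meet_in A {u r, l s} = join_in A {}" using H by blast
  have j0: "\<forall>r s. r < s \<longrightarrow> join_in A {u r, l s} = meet_in A {}" using H by blast
  have ru: "\<And>r. u r = join_in A (u ` {s. r < s})" using H by blast
  have rl: "\<And>s. l s = join_in A (l ` {r. r < s})" using H by blast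
  show ?thesis unfolding f sg_def ext_C_def fst_conv snd_conv mem_Collect_eq prod.case
  proof (intro conjI allI impI)
    fix r s :: rat assume "s \<le> r"
    then show "meet_in A {l (- r), u (- s)} = join_in A {}" using m0 by (simp add: insert_commute)
  next
    fix r :: rat show "l (- r) = join_in A ((\<lambda>s. l (- s)) ` {s. r < s})"
      unfolding img_neg1 by (rule rl)
  next
    fix s :: rat show "u (- s) = join_in A ((\<lambda>s. u (- s)) ` {r. r < s})"
      unfolding img_neg2 using ru[of "- s"] by simp
  next
    fix r s :: rat assume "r < s"
    then show "join_in A {l (- r), u (- s)} = meet_in A {}" using j0 by (simp add: insert_commute)
  qed (use uA lA in auto)
qed

lemma sg_sg: "sg (sg f) = f"
  by (simp add: sg_def)

lemma sg_le: "ext_le f g \<longleftrightarrow> ext_le (sg g) (sg f)"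
proof -
  have A: "(\<forall>r. snd g (-r) \<le> snd f (-r)) \<longleftrightarrow> (\<forall>s. snd g s \<le> snd f s)"
    using allneg[of "\<lambda>r. snd g r \<le> snd f r"] by simp
  have B: "(\<forall>r. fst f (-r) \<le> fst g (-r)) \<longleftrightarrow> (\<forall>s. fst f s \<le> fst g s)"
    using allneg[of "\<lambda>r. fst f r \<le> fst g r"] by simp
  show ?thesis unfolding ext_le_def sg_def fst_conv snd_conv A B by blast
qed

lemma eB_sg: "eB (sg x) = sg (eB x)"
  by (simp add: eB_def sg_def)

lemma eB_emb:
  assumes "x \<in> ext_C (UNIV::'a::frame set)" "y \<in> ext_C (UNIV::'a set)"
  shows "ext_le (eB x) (eB y) \<longleftrightarrow> ext_le x y"
proof
  assume "ext_le x y" then show "ext_le (eB x) (eB y)"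
    unfolding ext_le_def eB_def by (auto intro: pcpc_mono)
next
  assume le: "ext_le (eB x) (eB y)"
  obtain u l where x: "x = (u, l)" by (cases x)
  obtain u' l' where y: "y = (u', l')" by (cases y)
  have a: "pc (pc (u r)) \<le> pc (pc (u' r))" for r using le unfolding x y ext_le_def eB_def by simp
  have b: "pc (pc (l' s)) \<le> pc (pc (l s))" for s using le unfolding x y ext_le_def eB_def by simp
  have "u r \<le> u' r" for r
  proof -
    have "u r = (SUP s\<in>{s. r<s}. pc (l s))" using ext_C_U_D(2) assms(1) x by blast
    also have "... \<le> (SUP s\<in>{s. r<s}. pc (l' s))"
      by (rule SUP_mono) (metis b pc3 pc_anti order_refl)
    also have "... = u' r" using ext_C_U_D(2) assms(2) y by metis
    finally show ?thesis .
  qed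
  moreover have "l' s \<le> l s" for s
  proof -
    have "l' = lofU u'" "l = lofU u" using ext_C_U_D(1) assms x y by blast+
    moreover have "lofU u' s \<le> lofU u s" unfolding lofU_def
      by (rule SUP_mono) (metis a pc3 pc_anti order_refl)
    ultimately show ?thesis by simp
  qed
  ultimately show "ext_le x y" unfolding x y ext_le_def by simp
qed

lemma lub_exists:
  assumes S: "S \<subseteq> ext_C (booleanization::'a::frame set)"
  shows "\<exists>x. lub_wrt ext_le (ext_C booleanization) S x"
proof -
  define U where "U r = pc (pc (SUP f\<in>S. fst f r))" for r
  have UB: "\<forall>r. U r \<in> booleanization" by (simp add: U_def B_pcpc)
  have frc: "fst f r = pc (pc (SUP s\<in>{s. r<s}. fst f s))" if "f \<in> S" for f r
  proof -
    have "f \<in> ext_C booleanization" using S that by blast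
    then have "(fst f, snd f) \<in> ext_C booleanization" by simp
    then show ?thesis unfolding ext_C_B_iff by blast
  qed
  have Urc: "\<forall>r. U r = pc (pc (SUP s\<in>{s. r<s}. U s))"
  proof
    fix r
    have "pc (pc (SUP s\<in>{s. r<s}. U s)) = pc (pc (SUP s\<in>{s. r<s}. SUP f\<in>S. fst f s))"
      unfolding U_def by (rule pcpc_SUP[symmetric])
    also have "... = pc (pc (SUP f\<in>S. SUP s\<in>{s. r<s}. fst f s))" by (rule arg_cong[where f="\<lambda>x. pc (pc x)"], rule SUP_commute)
    also have "... = pc (pc (SUP f\<in>S. pc (pc (SUP s\<in>{s. r<s}. fst f s))))" by (rule pcpc_SUP)
    also have "(SUP f\<in>S. pc (pc (SUP s\<in>{s. r<s}. fst f s))) = (SUP f\<in>S. fst f r)"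
      by (rule SUP_cong[OF refl], rule frc[symmetric])
    also have "pc (pc (SUP f\<in>S. fst f r)) = U r" unfolding U_def ..
    finally show "U r = pc (pc (SUP s\<in>{s. r<s}. U s))" by simp
  qed
  have mem: "(U, lofB U) \<in> ext_C booleanization" by (rule ext_C_B_intro[OF UB Urc])
  have "lub_wrt ext_le (ext_C booleanization) S (U, lofB U)"
    unfolding lub_wrt_def
  proof (intro conjI ballI impI)
    show "(U, lofB U) \<in> ext_C booleanization" by (rule mem)
  next
    fix f assume "f \<in> S"
    then have le: "fst f r \<le> U r" for r unfolding U_def
      by (meson SUP_upper le_pcpc order_trans)
    have fm: "f \<in> ext_C booleanization" using S \<open>f \<in> S\<close> by blast
    show "ext_le f (U, lofB U)" using ext_le_B[OF fm mem] le by simp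
  next
    fix y assume y: "y \<in> ext_C booleanization" "\<forall>f\<in>S. ext_le f y"
    have yB: "fst y r \<in> booleanization" for r
    proof -
      have "(fst y, snd y) \<in> ext_C booleanization" using y(1) by simp
      then show ?thesis unfolding ext_C_B_iff by blast
    qed
    have "U r \<le> fst y r" for r
    proof -
      have "(SUP f\<in>S. fst f r) \<le> fst y r"
        using y S by (intro SUP_least) (auto simp: ext_le_def)
      then show ?thesis unfolding U_def using yB[of r] by (metis B_eq pcpc_mono)
    qed
    then show "ext_le (U, lofB U) y" using ext_le_B[OF mem y(1)] by simp
  qed
  then show ?thesis by blast
qed


lemma B_fst: "f \<in> ext_C (booleanization::'a::frame set) \<Longrightarrow> fst f r \<in> booleanization"
proof -
  assume "f \<in> ext_C booleanization"
  then have "(fst f, snd f) \<in> ext_C (booleanization::'a set)" by simp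
  then show ?thesis unfolding ext_C_B_iff by blast
qed

lemma rc_fst: "f \<in> ext_C (booleanization::'a::frame set) \<Longrightarrow>
   \<forall>r. fst f r = pc (pc (SUP s\<in>{s. r<s}. fst f s))"
proof -
  assume "f \<in> ext_C booleanization"
  then have "(fst f, snd f) \<in> ext_C (booleanization::'a set)" by simp
  then show ?thesis unfolding ext_C_B_iff by blast
qed

lemma join_dense:
  assumes CR: "\<forall>a::'a::frame. a = Sup {b. completely_below b a}"
    and q: "q \<in> ext_C (booleanization::'a set)"
  shows "lub_wrt ext_le (ext_C booleanization)
           {eB x | x. x \<in> ext_C (UNIV::'a set) \<and> ext_le (eB x) q} q"
  unfolding lub_wrt_def
proof (intro conjI ballI impI)
  show "q \<in> ext_C booleanization" by (rule q)
next
  fix d assume "d \<in> {eB x | x. x \<in> ext_C (UNIV::'a set) \<and> ext_le (eB x) q}"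
  then show "ext_le d q" by blast
next
  fix y assume y: "y \<in> ext_C booleanization"
    "\<forall>d\<in>{eB x | x. x \<in> ext_C (UNIV::'a set) \<and> ext_le (eB x) q}. ext_le d y"
  define u where "u = fst q"
  have urc: "\<forall>r. u r = pc (pc (SUP s\<in>{s. r<s}. u s))" unfolding u_def by (rule rc_fst[OF q])
  have uB: "u t \<in> booleanization" for t unfolding u_def by (rule B_fst[OF q])
  have "u r \<le> fst y r" for r
  proof -
    have "(SUP s\<in>{s. r<s}. u s) \<le> fst y r"
    proof (rule SUP_least)
      fix s assume "s \<in> {s. r<s}"
      then have rs: "r < s" by simp
      have "Sup {b. completely_below b (u s)} \<le> fst y r"
      proof (rule Sup_least)
        fix a assume "a \<in> {b. completely_below b (u s)}"
        then have cb: "completely_below a (u s)" by simp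
        obtain x where x: "x \<in> ext_C (UNIV::'a set)" "a \<le> fst x r" "\<forall>t. fst x t \<le> u s"
          "\<forall>t. s \<le> t \<longrightarrow> fst x t = bot"
          using construct[OF cb rs] by blast
        have ex: "eB x \<in> ext_C booleanization" by (rule eB_mem[OF x(1)])
        have "pc (pc (fst x t)) \<le> u t" for t
        proof (cases "s \<le> t")
          case True
          then show ?thesis using x(4) by (simp add: pc_bot pc_top)
        next
          case False
          then have "u s \<le> u t" using anti_B[OF urc, of t s] by simp
          then have "fst x t \<le> u t" by (rule order_trans[OF spec[OF x(3)]])
          then have "pc (pc (fst x t)) \<le> pc (pc (u t))" by (rule pcpc_mono)
          then show ?thesis using B_eq[OF uB[of t]] by simp
        qed
        then have "ext_le (eB x) q" using ext_le_B[OF ex q] by (simp add: eB_def u_def)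
        then have "ext_le (eB x) y" using y(2) x(1) by blast
        then have "pc (pc (fst x r)) \<le> fst y r" by (simp add: ext_le_def eB_def)
        then show "a \<le> fst y r" by (rule order_trans[OF order_trans[OF x(2) le_pcpc]])
      qed
      then show "u s \<le> fst y r" by (rule ord_eq_le_trans[OF spec[OF CR]])
    qed
    then have "pc (pc (SUP s\<in>{s. r<s}. u s)) \<le> pc (pc (fst y r))" by (rule pcpc_mono)
    also have "... = fst y r" by (rule B_eq[OF B_fst[OF y(1)]])
    finally show ?thesis by (rule ord_eq_le_trans[OF spec[OF urc]])
  qed
  then show "ext_le q y" using ext_le_B[OF q y(1)] by (simp add: u_def)
qed

lemma meet_dense:
  assumes CR: "\<forall>a::'a::frame. a = Sup {b. completely_below b a}"
    and q: "q \<in> ext_C (booleanization::'a set)"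
  shows "glb_wrt ext_le (ext_C booleanization)
           {eB x | x. x \<in> ext_C (UNIV::'a set) \<and> ext_le q (eB x)} q"
  unfolding glb_wrt_def
proof (intro conjI ballI impI)
  show "q \<in> ext_C booleanization" by (rule q)
next
  fix d assume "d \<in> {eB x | x. x \<in> ext_C (UNIV::'a set) \<and> ext_le q (eB x)}"
  then show "ext_le q d" by blast
next
  fix y assume y: "y \<in> ext_C booleanization"
    "\<forall>d\<in>{eB x | x. x \<in> ext_C (UNIV::'a set) \<and> ext_le q (eB x)}. ext_le y d"
  have L: "lub_wrt ext_le (ext_C booleanization)
           {eB x | x. x \<in> ext_C (UNIV::'a set) \<and> ext_le (eB x) (sg q)} (sg q)"
    by (rule join_dense[OF CR sg_mem[OF q]])
  have "ext_le d (sg y)"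
    if dD: "d \<in> {eB x | x. x \<in> ext_C (UNIV::'a set) \<and> ext_le (eB x) (sg q)}" for d
  proof -
    obtain x where x: "d = eB x" "x \<in> ext_C (UNIV::'a set)" "ext_le (eB x) (sg q)"
      using dD by blast
    have "ext_le (sg (sg q)) (sg (eB x))" using x(3) sg_le by blast
    then have "ext_le q (eB (sg x))" by (simp add: sg_sg eB_sg)
    moreover have "sg x \<in> ext_C UNIV" by (rule sg_mem[OF x(2)])
    ultimately have "ext_le y (eB (sg x))" using y(2) by blast
    then have "ext_le (sg (eB (sg x))) (sg y)" using sg_le by blast
    then show "ext_le d (sg y)" by (simp add: x(1) eB_sg sg_sg)
  qed
  then have "ext_le (sg q) (sg y)" using L sg_mem[OF y(1)] unfolding lub_wrt_def by blast
  then show "ext_le y q" using sg_le by blast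
qed

theorem corollary3p10:
  assumes "completely_regular TYPE('a::frame)"
  shows "\<exists>e. is_DM_completion ext_le (ext_C (UNIV :: 'a set))
                               ext_le (ext_C (booleanization :: 'a set)) e"
proof (intro exI)
  have CR: "\<forall>a::'a. a = Sup {b. completely_below b a}"
    using assms unfolding completely_regular_def by blast
  show "is_DM_completion ext_le (ext_C (UNIV :: 'a set)) ext_le (ext_C (booleanization :: 'a set)) eB"
    unfolding is_DM_completion_def
  proof (intro conjI ballI allI impI)
    fix x :: "(rat \<Rightarrow> 'a) \<times> (rat \<Rightarrow> 'a)" show "ext_le x x" by (simp add: ext_le_def)
  next
    fix x y z :: "(rat \<Rightarrow> 'a) \<times> (rat \<Rightarrow> 'a)" assume "ext_le x y" "ext_le y z"
    then show "ext_le x z" unfolding ext_le_def by (meson order_trans)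
  next
    fix x y :: "(rat \<Rightarrow> 'a) \<times> (rat \<Rightarrow> 'a)" assume "ext_le x y" "ext_le y x"
    then show "x = y" unfolding ext_le_def by (simp add: prod_eq_iff fun_eq_iff antisym)
  next
    fix S assume "S \<subseteq> ext_C (booleanization :: 'a set)"
    then show "\<exists>x. lub_wrt ext_le (ext_C booleanization) S x" by (rule lub_exists)
  next
    show "eB ` ext_C UNIV \<subseteq> ext_C (booleanization :: 'a set)" using eB_mem by blast
  next
    fix x y assume "x \<in> ext_C (UNIV :: 'a set)" "y \<in> ext_C (UNIV :: 'a set)"
    then show "ext_le (eB x) (eB y) \<longleftrightarrow> ext_le x y" by (rule eB_emb)
  next
    fix q assume "q \<in> ext_C (booleanization :: 'a set)"
    then show "lub_wrt ext_le (ext_C booleanization)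
           {eB x | x. x \<in> ext_C UNIV \<and> ext_le (eB x) q} q" by (rule join_dense[OF CR])
  next
    fix q assume "q \<in> ext_C (booleanization :: 'a set)"
    then show "glb_wrt ext_le (ext_C booleanization)
           {eB x | x. x \<in> ext_C UNIV \<and> ext_le q (eB x)} q" by (rule meet_dense[OF CR])
  qed
qed

end
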